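(* Let $n\ge 1$, $N=\{1,\dots,n\}$, $A=[0,1]$, and let $f$ be an OWA mechanism with weights $w_1,\dots,w_n\in[0,1]$, $\sum_j w_j=1$. Then $f$ satisfies proportional fairness (PF) if and only if $w_j=\frac1n$ for all $j\in\{1,\dots,n\}$.
   Context: A mechanism is a map $f:A^n\to A$ from profiles $x=(x_i)_{i\in N}$ of reported locations to a facility location. An OWA mechanism with weights $w_1,\dots,w_n$ returns $f(x)=\sum_{j=1}^n w_j x_{\pi(j)}$, where $\pi$ is a permutation of $N$ with $x_{\pi(1)}\le\dots\le x_{\pi(n)}$. The mechanism $f$ satisfies PF if for every profile $x\in A^n$, every coalition $S\subseteq N$ (nonempty) and every $i\in S$, $|x_i - f(x)| \le 1-\frac{|S|}{n} + r_S$, where $r_S=\max_{j\in S}x_j-\min_{j\in S}x_j$. *)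

theory Defs
  imports "HOL-Analysis.Analysis"
begin

text \<open>Agents are indexed by 0..n-1 (i.e. N = {0..<n}); a profile is a function
  x :: nat => real, only its values on {0..<n} matter. Weights w j, j < n,
  correspond to w_{j+1} of the paper.\<close>

definition owa :: "nat \<Rightarrow> (nat \<Rightarrow> real) \<Rightarrow> (nat \<Rightarrow> real) \<Rightarrow> real" where
  "owa n w x = (\<Sum>j<n. w j * (sort (map x [0..<n])) ! j)"

definition r_coal :: "(nat \<Rightarrow> real) \<Rightarrow> nat set \<Rightarrow> real" where
  "r_coal x S = Max (x ` S) - Min (x ` S)"

definition PF :: "nat \<Rightarrow> ((nat \<Rightarrow> real) \<Rightarrow> real) \<Rightarrow> bool" where
  "PF n f \<longleftrightarrow> (\<forall>x. (\<forall>i<n. x i \<in> {0..1}) \<longrightarrow>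
     (\<forall>S. S \<subseteq> {0..<n} \<longrightarrow> S \<noteq> {} \<longrightarrow>
       (\<forall>i\<in>S. \<bar>x i - f x\<bar> \<le> 1 - real (card S) / real n + r_coal x S)))"

end

theory Submission
  imports Defs
begin

lemma owa_uniform:
  assumes "n \<ge> 1"
  shows "owa n (\<lambda>_. 1 / real n) x = (\<Sum>i<n. x i) / real n"
proof -
  have "owa n (\<lambda>_. 1 / real n) x = (1 / real n) * (\<Sum>j<n. sort (map x [0..<n]) ! j)"
    unfolding owa_def by (simp add: sum_distrib_left)
  also have "(\<Sum>j<n. sort (map x [0..<n]) ! j) = sum_list (sort (map x [0..<n]))"
    by (simp add: sum_list_sum_nth atLeast0LessThan)
  also have "\<dots> = sum_list (map x [0..<n])"
    by (metis mset_sort sum_mset_sum_list)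
  also have "\<dots> = (\<Sum>i<n. x i)"
    by (simp add: sum_list_distinct_conv_sum_set atLeast0LessThan)
  finally show ?thesis by simp
qed

lemma owa_step:
  assumes "m \<le> n"
  shows "owa n w (\<lambda>i. if i < m then 0 else 1) = (\<Sum>j\<in>{m..<n}. w j)"
proof -
  let ?x = "\<lambda>i::nat. if i < m then 0 else (1::real)"
  have "sorted (map ?x [0..<n])"
    by (auto simp: sorted_iff_nth_mono)
  then have s: "sort (map ?x [0..<n]) = map ?x [0..<n]" by (rule sorted_sort_id)
  have "owa n w ?x = (\<Sum>j<n. w j * ?x j)"
    unfolding owa_def s by (intro sum.cong) auto
  also have "\<dots> = (\<Sum>j<n. if \<not> j < m then w j else 0)"
    by (intro sum.cong) auto
  also have "\<dots> = (\<Sum>j\<in>{j\<in>{..<n}. \<not> j < m}. w j)"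
    by (rule sum.inter_filter[symmetric]) simp
  also have "{j\<in>{..<n}. \<not> j < m} = {m..<n}" by auto
  finally show ?thesis .
qed

lemma rcoal_const:
  assumes "\<forall>i\<in>S. x i = c" "S \<noteq> {}"
  shows "r_coal x S = 0"
proof -
  have "x ` S = {c}" using assms by auto
  then show ?thesis unfolding r_coal_def by simp
qed

theorem theorem4:
  fixes n :: nat and w :: "nat \<Rightarrow> real"
  assumes "n \<ge> 1"
    and "\<forall>j<n. w j \<in> {0..1}"
    and "(\<Sum>j<n. w j) = 1"
  shows "PF n (owa n w) \<longleftrightarrow> (\<forall>j<n. w j = 1 / real n)"
proof
  assume pf: "PF n (owa n w)"
  define T where "T m = (\<Sum>j\<in>{m..<n}. w j)" for m
  have T: "T m = (real n - real m) / real n" if "m \<le> n" for m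
  proof -
    let ?x = "\<lambda>i::nat. if i < m then 0 else (1::real)"
    have xr: "\<forall>i<n. ?x i \<in> {0..1}" by auto
    have f: "owa n w ?x = T m" using owa_step[OF that] T_def by simp
    have np: "real n > 0" using assms(1) by simp
    have H: "\<And>x S i. \<forall>i<n. x i \<in> {0..1} \<Longrightarrow> S \<subseteq> {0..<n} \<Longrightarrow> S \<noteq> {} \<Longrightarrow> i \<in> S \<Longrightarrow>
       \<bar>x i - owa n w x\<bar> \<le> 1 - real (card S) / real n + r_coal x S"
      using pf unfolding PF_def by blast
    have up: "T m \<le> (real n - real m) / real n"
    proof (cases "m = 0")
      case True
      then show ?thesis using assms(3) np by (simp add: T_def atLeast0LessThan)
    next
      case False
      let ?S = "{0..<m}"
      have "\<bar>?x 0 - owa n w ?x\<bar> \<le> 1 - real (card ?S) / real n + r_coal ?x ?S"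
        by (rule H[OF xr]) (use that False in auto)
      moreover have "r_coal ?x ?S = 0" using False by (intro rcoal_const[where c=0]) auto
      ultimately have "\<bar>T m\<bar> \<le> 1 - real m / real n" using False f by simp
      then show ?thesis using np by (simp add: diff_divide_distrib)
    qed
    have lo: "T m \<ge> (real n - real m) / real n"
    proof (cases "m = n")
      case True
      then show ?thesis by (simp add: T_def)
    next
      case False
      let ?S = "{m..<n}"
      have "\<bar>?x m - owa n w ?x\<bar> \<le> 1 - real (card ?S) / real n + r_coal ?x ?S"
        by (rule H[OF xr]) (use that False in auto)
      moreover have "r_coal ?x ?S = 0" using False that by (intro rcoal_const[where c=1]) auto
      ultimately have "\<bar>1 - T m\<bar> \<le> 1 - (real n - real m) / real n" using False f that by simp
      then show ?thesis by linarith
    qed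
    show ?thesis using up lo by linarith
  qed
  show "\<forall>j<n. w j = 1 / real n"
  proof (intro allI impI)
    fix j assume j: "j < n"
    have "T j = w j + T (Suc j)" unfolding T_def using j by (simp add: sum.atLeast_Suc_lessThan)
    then have "w j = T j - T (Suc j)" by simp
    also have "\<dots> = (real n - real j) / real n - (real n - real (Suc j)) / real n"
      using T j by simp
    also have "\<dots> = 1 / real n" by (simp add: diff_divide_distrib[symmetric])
    finally show "w j = 1 / real n" .
  qed
next
  assume wu: "\<forall>j<n. w j = 1 / real n"
  have eq: "owa n w = owa n (\<lambda>_. 1 / real n)"
    unfolding owa_def using wu by (intro ext sum.cong) auto
  have np: "real n > 0" using assms(1) by simp
  show "PF n (owa n w)"
    unfolding PF_def eq owa_uniform[OF assms(1)]
  proof (intro allI impI ballI)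
    fix x :: "nat \<Rightarrow> real" and S i
    assume xr: "\<forall>i<n. x i \<in> {0..1}" and Ssub: "S \<subseteq> {0..<n}" and Sne: "S \<noteq> {}" and i: "i \<in> S"
    have fin: "finite S" using Ssub finite_subset by blast
    define a where "a = Min (x ` S)"
    define b where "b = Max (x ` S)"
    define k where "k = card S"
    have ai: "a \<le> x i" unfolding a_def using fin i by simp
    have bi: "x i \<le> b" unfolding b_def using fin i by simp
    have iN: "i < n" using i Ssub by auto
    have xi: "0 \<le> x i" "x i \<le> 1" using xr iN by auto
    have a1: "a \<le> 1" using ai xi by linarith
    have b0: "b \<ge> 0" using bi xi by linarith
    have kn: "k \<le> n" unfolding k_def using Ssub card_mono[of "{0..<n}" S] by simp
    have sumsplit: "(\<Sum>i<n. x i) = sum x S + sum x ({..<n} - S)"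
      using Ssub fin by (metis atLeast0LessThan finite_lessThan sum.subset_diff add.commute)
    have cd: "card ({..<n} - S) = n - k"
      unfolding k_def using Ssub fin by (simp add: card_Diff_subset atLeast0LessThan)
    have sS1: "sum x S \<le> real k * b"
      unfolding k_def using sum_bounded_above[of S x b] fin b_def by simp
    have sS2: "sum x S \<ge> real k * a"
      unfolding k_def using sum_bounded_below[of S a x] fin a_def by simp
    have sR1: "sum x ({..<n} - S) \<le> real (n - k) * 1"
      using sum_bounded_above[of "{..<n} - S" x 1] xr cd by auto
    have sR2: "sum x ({..<n} - S) \<ge> 0"
      using xr by (intro sum_nonneg) auto
    have kb: "real k * b \<le> b * real n" using kn b0 by (metis mult.commute mult_left_mono of_nat_mono)
    have ka: "real k * a \<le> real k" using a1 by (simp add: mult_left_le)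
    have nk: "real (n - k) = real n - real k" using kn by simp
    let ?m = "(\<Sum>i<n. x i) / real n"
    have goal: "\<bar>x i - ?m\<bar> * real n \<le> real n - real k + (b - a) * real n"
    proof -
      have e: "\<bar>x i - ?m\<bar> * real n = \<bar>x i * real n - (\<Sum>i<n. x i)\<bar>"
      proof -
        have "\<bar>x i - ?m\<bar> * real n = \<bar>(x i - ?m) * real n\<bar>" using np by (simp add: abs_mult)
        also have "(x i - ?m) * real n = x i * real n - (\<Sum>i<n. x i)"
          using np by (simp add: left_diff_distrib)
        finally show ?thesis .
      qed
      have "real k * a \<le> real n * a + (real n - real k) * (1 - a) - (real n - real k)"
        using ka by (simp add: algebra_simps)
      have "(real n - real k) * a \<le> (real n - real k)"
        using a1 kn by (intro mult_left_le) auto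
      then have ka2: "real k * a \<ge> a * real n - (real n - real k)"
        by (simp add: algebra_simps)
      have bad: "(b - a) * real n = b * real n - a * real n" by (simp add: left_diff_distrib)
      have sR1': "sum x ({..<n} - S) \<le> real n - real k" using sR1 nk by simp
      have xb: "x i * real n \<le> b * real n" using bi np by simp
      have xa: "a * real n \<le> x i * real n" using ai np by simp
      show ?thesis unfolding e abs_le_iff using sR1' sumsplit sS1 sS2 sR1 sR2 kb ka2 nk ai bi
        np xa xb bad by (intro conjI; linarith)
    qed
    have "\<bar>x i - ?m\<bar> \<le> (real n - real k + (b - a) * real n) / real n"
      using goal np by (simp add: pos_le_divide_eq)
    also have "\<dots> = 1 - real k / real n + (b - a)"
      using np by (simp add: field_simps)
    finally show "\<bar>x i - ?m\<bar> \<le> 1 - real (card S) / real n + r_coal x S"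
      unfolding r_coal_def k_def a_def b_def .
  qed
qed

end
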